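(* Assume Assumption (I), and let $(L_k,u_k)$ be a sequence generated by Algorithm A (with $(\epsilon_k)$ monotonically decreasing). Then for all $k$, \[ \Phi_{\epsilon_{k+1}}(u_{k+1})+\frac\alpha2\|u_{k+1}-u_k\|_V^2+\beta\int_\Omega\psi_{\epsilon_k}'(u_k^2)(u_{k+1}-u_k)^2\,dx\le\Phi_{\epsilon_k}(u_k). \]
   Context: Standing assumptions: $\Omega\subset\mathbb R^d$ bounded Lipschitz domain; $V$ real Hilbert space with inner product $\langle\cdot,\cdot\rangle_V$, $V\subset L^2(\Omega)$ with compact and dense embedding; $V^*$ dual. $F:V\to\mathbb R$ weakly lower semicontinuous, bounded below by an affine function, continuously Fréchet differentiable. $\alpha>0$, $\beta>0$, $p\in(0,1)$. Assumption (I): the standing assumptions hold; $F'$ is completely continuous ($u_n\rightharpoonup u$ in $V$ implies $F'(u_n)\to F'(u)$ in $V^*$); and $F':V\to V^*$ is Lipschitz continuous on bounded sets. For $\epsilon>0$, $\psi_\epsilon(t)=\frac p2\frac{t}{\epsilon^{2-p}}+(1-\frac p2)\epsilon^p$ if $t\in[0,\epsilon^2)$, $\psi_\epsilon(t)=t^{p/2}$ if $t\ge\epsilon^2$, $\psi_\epsilon'(t)=\frac p2\min(\epsilon^{p-2},t^{(p-2)/2})$. $G_\epsilon(u)=\int_\Omega\psi_\epsilon(|u|^2)dx$ and $\Phi_\epsilon(u)=F(u)+\frac\alpha2\|u\|_V^2+\beta G_\epsilon(u)$. Algorithm A: choose a monotonically decreasing sequence $\epsilon_k\searrow0$, constants $\gamma>1$,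 $\tilde L>0$, and $u_0\in V$. Given $u_k$, for $L\ge0$ let problem (Q$_{k,L}$) be $\min_{u\in V} F(u_k)+F'(u_k)(u-u_k)+\frac L2\|u-u_k\|_V^2+\frac\alpha2\|u\|_V^2+\beta\int_\Omega\big[\psi_{\epsilon_k}(u_k^2)+\psi_{\epsilon_k}'(u_k^2)(u^2-u_k^2)\big]dx$ (strongly convex, unique minimizer), and let (D$_{k,L}$) be the condition $F(u_{k+1})\le F(u_k)+F'(u_k)(u_{k+1}-u_k)+L\|u_{k+1}-u_k\|_V^2$ for its minimizer $u_{k+1}$. $L_k$ is the smallest $L\in\{0\}\cup\{\tilde L\gamma^l:l\ge0\}$ for which (D$_{k,L}$) holds, and $u_{k+1}$ is the corresponding minimizer; then $k\mapsto k+1$. *)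

theory Defs
  imports "HOL-Analysis.Analysis"
begin

definition lipschitz_domain :: "'a::euclidean_space set \<Rightarrow> bool" where
  "lipschitz_domain \<Omega> \<longleftrightarrow> open \<Omega> \<and> bounded \<Omega> \<and> \<Omega> \<noteq> {} \<and>
     (\<forall>x\<in>frontier \<Omega>. \<exists>e r C h. norm e = 1 \<and> r > 0 \<and>
        C-lipschitz_on {y. y \<bullet> e = 0} (h :: 'a \<Rightarrow> real) \<and>
        \<Omega> \<inter> ball x r = {y \<in> ball x r. y \<bullet> e < h (y - (y \<bullet> e) *\<^sub>R e)})"

definition L2_on :: "'a::euclidean_space set \<Rightarrow> ('a \<Rightarrow> real) \<Rightarrow> bool" where
  "L2_on \<Omega> f \<longleftrightarrow> (\<lambda>x. indicator \<Omega> x * f x) \<in> borel_measurable lebesgue \<and>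
                   set_integrable lebesgue \<Omega> (\<lambda>x. (f x)\<^sup>2)"

definition L2_dist2 :: "'a::euclidean_space set \<Rightarrow> ('a \<Rightarrow> real) \<Rightarrow> ('a \<Rightarrow> real) \<Rightarrow> real" where
  "L2_dist2 \<Omega> f g = (LINT x:\<Omega>|lebesgue. (f x - g x)\<^sup>2)"

definition compact_dense_embedding ::
  "'a::euclidean_space set \<Rightarrow> ('v::{real_inner,complete_space} \<Rightarrow> 'a \<Rightarrow> real) \<Rightarrow> bool" where
  "compact_dense_embedding \<Omega> \<iota> \<longleftrightarrow>
     (\<forall>u. L2_on \<Omega> (\<iota> u)) \<and>
     (\<forall>a b u v x. \<iota> (a *\<^sub>R u + b *\<^sub>R v) x = a * \<iota> u x + b * \<iota> v x) \<and>
     (\<forall>u. (AE x in lebesgue. x \<in> \<Omega> \<longrightarrow> \<iota> u x = 0) \<longrightarrow> u = 0) \<and>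
     (\<exists>C. \<forall>u. L2_dist2 \<Omega> (\<iota> u) (\<lambda>_. 0) \<le> C * (norm u)\<^sup>2) \<and>
     (\<forall>s::nat \<Rightarrow> 'v. bounded (range s) \<longrightarrow>
        (\<exists>r f. strict_mono r \<and> L2_on \<Omega> f \<and>
               (\<lambda>n. L2_dist2 \<Omega> (\<iota> (s (r n))) f) \<longlonglongrightarrow> 0)) \<and>
     (\<forall>f e. L2_on \<Omega> f \<longrightarrow> e > 0 \<longrightarrow> (\<exists>u. L2_dist2 \<Omega> (\<iota> u) f < e))"

definition weak_conv :: "(nat \<Rightarrow> 'v::real_inner) \<Rightarrow> 'v \<Rightarrow> bool" where
  "weak_conv s u \<longleftrightarrow> (\<forall>v. (\<lambda>n. inner (s n) v) \<longlonglongrightarrow> inner u v)"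

definition weakly_lsc :: "('v::real_inner \<Rightarrow> real) \<Rightarrow> bool" where
  "weakly_lsc F \<longleftrightarrow> (\<forall>s u. weak_conv s u \<longrightarrow>
       ereal (F u) \<le> liminf (\<lambda>n. ereal (F (s n))))"

definition bounded_below_affine :: "('v::real_normed_vector \<Rightarrow> real) \<Rightarrow> bool" where
  "bounded_below_affine F \<longleftrightarrow> (\<exists>(l::'v \<Rightarrow>\<^sub>L real) c. \<forall>u. l u + c \<le> F u)"

definition standing_F :: "('v::{real_inner,complete_space} \<Rightarrow> real) \<Rightarrow> ('v \<Rightarrow> ('v \<Rightarrow>\<^sub>L real)) \<Rightarrow> bool" where
  "standing_F F F' \<longleftrightarrow> weakly_lsc F \<and> bounded_below_affine F \<and>
     (\<forall>u. (F has_derivative blinfun_apply (F' u)) (at u)) \<and> continuous_on UNIV F'"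

definition assumption_I :: "('v::{real_inner,complete_space} \<Rightarrow> real) \<Rightarrow> ('v \<Rightarrow> ('v \<Rightarrow>\<^sub>L real)) \<Rightarrow> bool" where
  "assumption_I F F' \<longleftrightarrow> standing_F F F' \<and>
     (\<forall>s u. weak_conv s u \<longrightarrow> (\<lambda>n. F' (s n)) \<longlonglongrightarrow> F' u) \<and>
     (\<forall>B. bounded B \<longrightarrow> (\<exists>C. \<forall>x\<in>B. \<forall>y\<in>B. norm (F' x - F' y) \<le> C * dist x y))"

definition psi :: "real \<Rightarrow> real \<Rightarrow> real \<Rightarrow> real" where
  "psi p \<epsilon> t = (if t < \<epsilon>\<^sup>2 then p/2 * t / \<epsilon> powr (2 - p) + (1 - p/2) * \<epsilon> powr p
                 else t powr (p/2))"

text \<open>psi' eps t = p/2 * min(eps^(p-2), t^((p-2)/2)), written piecewise so that t = 0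
  gives eps^(p-2) (as t^((p-2)/2) = +infinity there).\<close>
definition psi' :: "real \<Rightarrow> real \<Rightarrow> real \<Rightarrow> real" where
  "psi' p \<epsilon> t = (if t < \<epsilon>\<^sup>2 then p/2 * \<epsilon> powr (p - 2) else p/2 * t powr ((p - 2)/2))"

definition G_eps :: "'a::euclidean_space set \<Rightarrow> ('v \<Rightarrow> 'a \<Rightarrow> real) \<Rightarrow> real \<Rightarrow> real \<Rightarrow> 'v \<Rightarrow> real" where
  "G_eps \<Omega> \<iota> p \<epsilon> u = (LINT x:\<Omega>|lebesgue. psi p \<epsilon> (\<bar>\<iota> u x\<bar>\<^sup>2))"

definition Phi_eps :: "'a::euclidean_space set \<Rightarrow> ('v::real_normed_vector \<Rightarrow> 'a \<Rightarrow> real) \<Rightarrow>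
    ('v \<Rightarrow> real) \<Rightarrow> real \<Rightarrow> real \<Rightarrow> real \<Rightarrow> real \<Rightarrow> 'v \<Rightarrow> real" where
  "Phi_eps \<Omega> \<iota> F \<alpha> \<beta> p \<epsilon> u = F u + \<alpha>/2 * (norm u)\<^sup>2 + \<beta> * G_eps \<Omega> \<iota> p \<epsilon> u"

definition Q_obj :: "'a::euclidean_space set \<Rightarrow> ('v::real_normed_vector \<Rightarrow> 'a \<Rightarrow> real) \<Rightarrow>
    ('v \<Rightarrow> real) \<Rightarrow> ('v \<Rightarrow> ('v \<Rightarrow>\<^sub>L real)) \<Rightarrow> real \<Rightarrow> real \<Rightarrow> real \<Rightarrow> real \<Rightarrow>
    'v \<Rightarrow> real \<Rightarrow> 'v \<Rightarrow> real" where
  "Q_obj \<Omega> \<iota> F F' \<alpha> \<beta> p \<epsilon> uk L u =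
     F uk + F' uk (u - uk) + L/2 * (norm (u - uk))\<^sup>2 + \<alpha>/2 * (norm u)\<^sup>2 +
     \<beta> * (LINT x:\<Omega>|lebesgue. psi p \<epsilon> ((\<iota> uk x)\<^sup>2) +
                              psi' p \<epsilon> ((\<iota> uk x)\<^sup>2) * ((\<iota> u x)\<^sup>2 - (\<iota> uk x)\<^sup>2))"

definition is_Q_min where
  "is_Q_min \<Omega> \<iota> F F' \<alpha> \<beta> p \<epsilon> uk L w \<longleftrightarrow>
     (\<forall>u. Q_obj \<Omega> \<iota> F F' \<alpha> \<beta> p \<epsilon> uk L w \<le> Q_obj \<Omega> \<iota> F F' \<alpha> \<beta> p \<epsilon> uk L u)"

definition descent_cond :: "('v::real_normed_vector \<Rightarrow> real) \<Rightarrow> ('v \<Rightarrow> ('v \<Rightarrow>\<^sub>L real)) \<Rightarrow>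
    'v \<Rightarrow> real \<Rightarrow> 'v \<Rightarrow> bool" where
  "descent_cond F F' uk L w \<longleftrightarrow> F w \<le> F uk + F' uk (w - uk) + L * (norm (w - uk))\<^sup>2"

definition L_candidates :: "real \<Rightarrow> real \<Rightarrow> real set" where
  "L_candidates Lt \<gamma> = {0} \<union> range (\<lambda>l::nat. Lt * \<gamma> ^ l)"

definition algorithm_A where
  "algorithm_A \<Omega> \<iota> F F' \<alpha> \<beta> p \<epsilon> \<gamma> Lt u0 L u \<longleftrightarrow>
     (\<forall>k. \<epsilon> k > 0) \<and> decseq \<epsilon> \<and> \<epsilon> \<longlonglongrightarrow> 0 \<and> \<gamma> > 1 \<and> Lt > 0 \<and> u 0 = u0 \<and>
     (\<forall>k. L k \<in> L_candidates Lt \<gamma> \<and>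
          is_Q_min \<Omega> \<iota> F F' \<alpha> \<beta> p (\<epsilon> k) (u k) (L k) (u (Suc k)) \<and>
          descent_cond F F' (u k) (L k) (u (Suc k)) \<and>
          (\<forall>L'\<in>L_candidates Lt \<gamma>. L' < L k \<longrightarrow>
              (\<forall>w. is_Q_min \<Omega> \<iota> F F' \<alpha> \<beta> p (\<epsilon> k) (u k) L' w \<longrightarrow>
                   \<not> descent_cond F F' (u k) L' w)))"

end

theory Submission imports Defs begin


definition T :: "real \<Rightarrow> real \<Rightarrow> real \<Rightarrow> real" where
  "T q c s = c powr q + q * c powr (q - 1) * (s - c)"

lemma amgm: fixes q x :: real assumes "0 < q" "q < 1" "x > 0" shows "x powr q \<le> 1 + q * (x - 1)"
  using Youngs_inequality_0[of q "1-q" x 1] assms by (simp add: algebra_simps)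

lemma K1: assumes "0 < q" "q < 1" "c > 0" "s > 0" shows "s powr q \<le> T q c s"
proof -
  have "(s/c) powr q \<le> 1 + q * (s/c - 1)" using amgm[of q "s/c"] assms by simp
  hence "c powr q * (s/c) powr q \<le> c powr q * (1 + q * (s/c - 1))"
    using assms by (intro mult_left_mono) auto
  moreover have "c powr q * (s/c) powr q = s powr q" using assms by (simp add: powr_divide)
  moreover have "c powr q * (1 + q * (s/c - 1)) = T q c s"
    using assms unfolding T_def by (simp add: powr_diff field_simps)
  ultimately show ?thesis by simp
qed

lemma K2: assumes "0 < q" "q < 1" "0 < a" "a \<le> b" "s \<le> a" shows "T q a s \<le> T q b s"
proof -
  have "T q b s = T q b a + q * b powr (q - 1) * (s - a)" unfolding T_def by (simp add: algebra_simps)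
  moreover have "a powr q \<le> T q b a" using K1 assms by simp
  moreover have "b powr (q-1) \<le> a powr (q-1)" using powr_mono2'[of "q-1" a b] assms by simp
  hence "q * a powr (q - 1) * (s - a) \<le> q * b powr (q - 1) * (s - a)"
    using assms by (simp add: mult_left_mono_neg mult_right_mono_neg)
  ultimately show ?thesis unfolding T_def by linarith
qed



lemma epow: fixes e p :: real assumes "e > 0" shows "e powr p = (e\<^sup>2) powr (p/2)"
proof -
  have "e\<^sup>2 = e powr 2" using assms by simp
  thus ?thesis by (simp add: powr_powr)
qed

lemma psi_T: assumes "e > 0"
  shows "psi p e t = (if t < e\<^sup>2 then T (p/2) (e\<^sup>2) t else t powr (p/2))"
proof -
  have a: "e powr p = (e\<^sup>2) powr (p/2)" using epow[OF assms] .
  have b: "e powr (p - 2) = (e\<^sup>2) powr (p/2 - 1)" using epow[of e "p-2"] assms by (simp add: diff_divide_distrib)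
  have c: "e powr (2 - p) * e powr (p - 2) = 1" using assms by (simp add: powr_add[symmetric])
  have e2: "e\<^sup>2 = e powr 2" using assms by simp
  have d: "e powr (p - 2) * e\<^sup>2 = e powr p" unfolding e2 by (simp add: powr_add[symmetric])
  have "p/2 * t / e powr (2 - p) + (1 - p/2) * e powr p = e powr p + p/2 * e powr (p-2) * (t - e\<^sup>2)"
  proof -
    have "1 / e powr (2 - p) = e powr (p - 2)" using c assms by (simp add: field_simps)
    hence eq1: "p/2 * t / e powr (2 - p) = p/2 * t * e powr (p-2)" by (metis times_divide_eq_right mult_1_right)
    have gen: "\<And>Y E. Y * e\<^sup>2 = E \<Longrightarrow> p/2 * t * Y + (1 - p/2) * E = E + p/2 * Y * (t - e\<^sup>2)"
      by (simp add: field_simps)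
    show ?thesis unfolding eq1 by (rule gen[OF d])
  qed
  thus ?thesis unfolding psi_def T_def using a b by simp
qed

lemma psi'_alt: assumes "e > 0"
  shows "psi' p e t = (if t < e\<^sup>2 then p/2 * (e\<^sup>2) powr (p/2 - 1) else p/2 * t powr (p/2 - 1))"
proof -
  have b: "e powr (p - 2) = (e\<^sup>2) powr (p/2 - 1)" using epow[of e "p-2"] assms by (simp add: diff_divide_distrib)
  show ?thesis unfolding psi'_def using b by (simp add: diff_divide_distrib)
qed

lemma psi_le_T: assumes "0 < p" "p < 1" "e > 0" "s \<ge> 0" "c \<ge> e\<^sup>2"
  shows "psi p e s \<le> T (p/2) c s"
proof (cases "s < e\<^sup>2")
  case True thus ?thesis using assms K2[of "p/2" "e\<^sup>2" c s] by (simp add: psi_T)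
next
  case False
  have "0 < e\<^sup>2" using assms by simp
  hence "0 < c" "0 < s" using False assms by linarith+
  thus ?thesis using False assms K1[of "p/2" c s] by (simp add: psi_T)
qed


lemma psi_tangent: assumes "0 < p" "p < 1" "e > 0" "s \<ge> 0" "t \<ge> 0"
  shows "psi p e s \<le> psi p e t + psi' p e t * (s - t)"
proof -
  have "psi p e t + psi' p e t * (s - t) = T (p/2) (max (e\<^sup>2) t) s"
    using assms by (auto simp: psi_T psi'_alt T_def field_simps)
  thus ?thesis using psi_le_T[OF assms(1-4), of "max (e\<^sup>2) t"] by simp
qed

lemma psi_mono: assumes "0 < p" "p < 1" "0 < e1" "e1 \<le> e2" "s \<ge> 0"
  shows "psi p e1 s \<le> psi p e2 s"
proof (cases "s < e2\<^sup>2")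
  case True
  have "e1\<^sup>2 \<le> e2\<^sup>2" using assms by (simp add: power_mono)
  thus ?thesis using True psi_le_T[of p e1 s "e2\<^sup>2"] assms psi_T[of e2 p s] by simp
next
  case False
  have "e1\<^sup>2 \<le> e2\<^sup>2" using assms by (simp add: power_mono)
  hence "\<not> s < e1\<^sup>2" using False by linarith
  thus ?thesis using False assms psi_T[of e2 p s] psi_T[of e1 p s] by simp
qed

lemma psi'_bounds: assumes "0 < p" "p < 1" "e > 0" "t \<ge> 0"
  shows "0 \<le> psi' p e t" "psi' p e t \<le> p/2 * e powr (p - 2)"
proof -
  show "0 \<le> psi' p e t" using assms unfolding psi'_def by auto
  have "t \<ge> e\<^sup>2 \<Longrightarrow> t powr ((p-2)/2) \<le> (e\<^sup>2) powr ((p-2)/2)"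
    using assms by (intro powr_mono2') auto
  moreover have "e powr (p - 2) = (e\<^sup>2) powr ((p-2)/2)" using epow[of e "p-2"] assms by simp
  ultimately show "psi' p e t \<le> p/2 * e powr (p - 2)" using assms unfolding psi'_def by auto
qed

lemma psi_nonneg: assumes "0 < p" "p < 1" "e > 0" "s \<ge> 0"
  shows "0 \<le> psi p e s"
  using assms unfolding psi_def by (auto intro!: add_nonneg_nonneg)

lemma psi_bound: assumes "0 < p" "p < 1" "e > 0" "s \<ge> 0"
  shows "\<bar>psi p e s\<bar> \<le> e powr p + p/2 * e powr (p - 2) * s"
proof -
  have up: "psi p e s \<le> T (p/2) (e\<^sup>2) s" using psi_le_T assms by simp
  have a: "e powr p = (e\<^sup>2) powr (p/2)" using epow[OF assms(3)] .
  have b: "e powr (p - 2) = (e\<^sup>2) powr (p/2 - 1)" using epow[OF assms(3), of "p-2"] by (simp add: diff_divide_distrib)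
  have "T (p/2) (e\<^sup>2) s = e powr p + p/2 * e powr (p - 2) * (s - e\<^sup>2)"
    unfolding T_def a b by simp
  moreover have "0 \<le> p/2 * e powr (p - 2) * e\<^sup>2" using assms by simp
  moreover have "0 \<le> psi p e s" using psi_nonneg assms by simp
  ultimately have "psi p e s \<le> e powr p + p/2 * e powr (p - 2) * s - p/2 * e powr (p - 2) * e\<^sup>2"
    using up by (simp add: right_diff_distrib)
  moreover have "\<bar>psi p e s\<bar> = psi p e s" using psi_nonneg assms by simp
  ultimately show ?thesis using \<open>0 \<le> p/2 * e powr (p - 2) * e\<^sup>2\<close> by linarith
qed


lemma psi_meas: "psi p e \<in> borel_measurable borel"
  unfolding psi_def by measurable

lemma psi'_meas: "psi' p e \<in> borel_measurable borel"
  unfolding psi'_def by measurable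

lemma lin_quad_zero: fixes D A :: real assumes "\<forall>t. 0 \<le> t * D + t\<^sup>2 * A" shows "D = 0"
proof (rule ccontr)
  assume D: "D \<noteq> 0"
  show False
  proof (cases "A > 0")
    case True
    have "0 \<le> (- D / (2*A)) * D + (- D / (2*A))\<^sup>2 * A" using assms by blast
    also have "\<dots> = - D\<^sup>2 / (4 * A)" using True by (simp add: field_simps power2_eq_square)
    finally show False using True D by (simp add: divide_nonneg_pos field_simps)
  next
    case False
    have "0 \<le> (- D) * D + (- D)\<^sup>2 * A" using assms by blast
    moreover have "(- D)\<^sup>2 * A \<le> 0" using False by (simp add: mult_nonneg_nonpos)
    moreover have "D * D > 0" using D by (simp flip: power2_eq_square)
    ultimately show False by simp
  qed
qed

lemma prod_bound: fixes a f g K :: real assumes "\<bar>a\<bar> \<le> K"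
  shows "\<bar>a * f * g\<bar> \<le> K * (f\<^sup>2 + g\<^sup>2)"
proof -
  have "0 \<le> (\<bar>f\<bar> - \<bar>g\<bar>)\<^sup>2" by simp
  hence "2 * (\<bar>f\<bar> * \<bar>g\<bar>) \<le> f\<^sup>2 + g\<^sup>2" by (simp add: power2_diff power2_abs mult.assoc)
  moreover have "0 \<le> \<bar>f\<bar> * \<bar>g\<bar>" by simp
  ultimately have fg: "\<bar>f\<bar> * \<bar>g\<bar> \<le> f\<^sup>2 + g\<^sup>2" by linarith
  have "\<bar>a * f * g\<bar> = \<bar>a\<bar> * (\<bar>f\<bar> * \<bar>g\<bar>)" by (simp add: abs_mult)
  also have "\<dots> \<le> K * (f\<^sup>2 + g\<^sup>2)" using assms fg by (intro mult_mono) auto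
  finally show ?thesis .
qed

lemma integrable_prod3:
  fixes N :: "'a measure" and a f g :: "'a \<Rightarrow> real"
  assumes "a \<in> borel_measurable N" "f \<in> borel_measurable N" "g \<in> borel_measurable N"
    "integrable N (\<lambda>x. (f x)\<^sup>2)" "integrable N (\<lambda>x. (g x)\<^sup>2)" "\<And>x. x \<in> space N \<Longrightarrow> \<bar>a x\<bar> \<le> K"
  shows "integrable N (\<lambda>x. a x * f x * g x)"
proof (rule Bochner_Integration.integrable_bound[where f="\<lambda>x. K * ((f x)\<^sup>2 + (g x)\<^sup>2)"])
  show "integrable N (\<lambda>x. K * ((f x)\<^sup>2 + (g x)\<^sup>2))" using assms by auto
  show "(\<lambda>x. a x * f x * g x) \<in> borel_measurable N" using assms by measurable
  show "AE x in N. norm (a x * f x * g x) \<le> norm (K * ((f x)\<^sup>2 + (g x)\<^sup>2))"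
  proof (rule AE_I2)
    fix x assume "x \<in> space N"
    hence "\<bar>a x * f x * g x\<bar> \<le> K * ((f x)\<^sup>2 + (g x)\<^sup>2)" using prod_bound assms by blast
    thus "norm (a x * f x * g x) \<le> norm (K * ((f x)\<^sup>2 + (g x)\<^sup>2))" by simp
  qed
qed

lemma integrable_psi:
  fixes N :: "'a measure" and f :: "'a \<Rightarrow> real"
  assumes "finite_measure N" "f \<in> borel_measurable N" "integrable N (\<lambda>x. (f x)\<^sup>2)"
    "0 < p" "p < 1" "e > 0"
  shows "integrable N (\<lambda>x. psi p e ((f x)\<^sup>2))"
proof (rule Bochner_Integration.integrable_bound[where f="\<lambda>x. e powr p + p/2 * e powr (p - 2) * (f x)\<^sup>2"])
  show "integrable N (\<lambda>x. e powr p + p/2 * e powr (p - 2) * (f x)\<^sup>2)"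
    using assms by (auto intro!: finite_measure.integrable_const)
  show "(\<lambda>x. psi p e ((f x)\<^sup>2)) \<in> borel_measurable N"
    using measurable_compose[OF _ psi_meas] assms(2) by measurable
  show "AE x in N. norm (psi p e ((f x)\<^sup>2)) \<le> norm (e powr p + p/2 * e powr (p - 2) * (f x)\<^sup>2)"
    using psi_bound[of p e] assms by (intro AE_I2) auto
qed


theorem lemma7p3:
  fixes \<Omega> :: "'a::euclidean_space set"
    and \<iota> :: "'v::{real_inner,complete_space} \<Rightarrow> 'a \<Rightarrow> real"
    and F :: "'v \<Rightarrow> real" and F' :: "'v \<Rightarrow> ('v \<Rightarrow>\<^sub>L real)"
    and \<alpha> \<beta> p \<gamma> Lt :: real and \<epsilon> :: "nat \<Rightarrow> real" and u0 :: 'v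
    and L :: "nat \<Rightarrow> real" and u :: "nat \<Rightarrow> 'v"
  assumes "lipschitz_domain \<Omega>"
    and "compact_dense_embedding \<Omega> \<iota>"
    and "assumption_I F F'"
    and "\<alpha> > 0" and "\<beta> > 0" and "0 < p" and "p < 1"
    and "algorithm_A \<Omega> \<iota> F F' \<alpha> \<beta> p \<epsilon> \<gamma> Lt u0 L u"
  shows "\<forall>k. Phi_eps \<Omega> \<iota> F \<alpha> \<beta> p (\<epsilon> (Suc k)) (u (Suc k))
             + \<alpha>/2 * (norm (u (Suc k) - u k))\<^sup>2
             + \<beta> * (LINT x:\<Omega>|lebesgue. psi' p (\<epsilon> k) ((\<iota> (u k) x)\<^sup>2) * (\<iota> (u (Suc k)) x - \<iota> (u k) x)\<^sup>2)
           \<le> Phi_eps \<Omega> \<iota> F \<alpha> \<beta> p (\<epsilon> k) (u k)"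
proof
  fix k
  define N where "N = restrict_space lebesgue \<Omega>"
  from assms(1) have opn: "open \<Omega>" and bdd: "bounded \<Omega>" unfolding lipschitz_domain_def by auto
  have lm: "\<Omega> \<in> lmeasurable" using lmeasurable_open bdd opn by auto
  have sets\<Omega>: "\<Omega> \<inter> space lebesgue \<in> sets lebesgue" using lm by (simp add: fmeasurableD)
  have finN: "finite_measure N"
  proof (rule finite_measureI)
    have "emeasure N (space N) = emeasure lebesgue \<Omega>"
      unfolding N_def using sets\<Omega> by (simp add: space_restrict_space emeasure_restrict_space)
    thus "emeasure N (space N) \<noteq> \<infinity>" using fmeasurableD2[OF lm] by simp
  qed
  have conv: "\<And>f::'a\<Rightarrow>real. (LINT x:\<Omega>|lebesgue. f x) = integral\<^sup>L N f"
    unfolding N_def set_lebesgue_integral_def by (rule integral_restrict_space[OF sets\<Omega>, symmetric])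
  note CD = assms(2)[unfolded compact_dense_embedding_def]
  have L2: "\<And>v. L2_on \<Omega> (\<iota> v)" using CD[THEN conjunct1] by blast
  have lin: "\<And>a b v w x. \<iota> (a *\<^sub>R v + b *\<^sub>R w) x = a * \<iota> v x + b * \<iota> w x"
    using CD[THEN conjunct2, THEN conjunct1] by blast
  have meas: "\<iota> z \<in> borel_measurable N" for z
  proof -
    have "(\<lambda>x. indicator \<Omega> x * \<iota> z x) \<in> borel_measurable N" unfolding N_def
      by (rule measurable_restrict_space1) (use L2 in \<open>auto simp: L2_on_def\<close>)
    moreover have "\<And>x. x \<in> space N \<Longrightarrow> indicator \<Omega> x * \<iota> z x = \<iota> z x"
      unfolding N_def by (simp add: space_restrict_space)
    ultimately show ?thesis using measurable_cong[where f="\<lambda>x. indicator \<Omega> x * \<iota> z x" and g="\<iota> z"] by blast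
  qed
  have sq: "integrable N (\<lambda>x. (\<iota> z x)\<^sup>2)" for z
    unfolding N_def integrable_restrict_space[OF sets\<Omega>] using L2[of z]
    by (simp add: L2_on_def set_integrable_def)
  note AA = assms(8)[unfolded algorithm_A_def]
  have epos: "\<And>k. \<epsilon> k > 0" using AA[THEN conjunct1] by blast
  have dec: "decseq \<epsilon>" using AA[THEN conjunct2, THEN conjunct1] .
  note AK = AA[THEN conjunct2, THEN conjunct2, THEN conjunct2, THEN conjunct2, THEN conjunct2, THEN conjunct2, rule_format, of k]
  have qmin: "is_Q_min \<Omega> \<iota> F F' \<alpha> \<beta> p (\<epsilon> k) (u k) (L k) (u (Suc k))"
    using AK[THEN conjunct2, THEN conjunct1] .
  have desc: "descent_cond F F' (u k) (L k) (u (Suc k))"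
    using AK[THEN conjunct2, THEN conjunct2, THEN conjunct1] .
  define e where "e = \<epsilon> k"
  define e' where "e' = \<epsilon> (Suc k)"
  define v where "v = u k"
  define w where "w = u (Suc k)"
  define h where "h = v - w"
  define Lk where "Lk = L k"
  have e0: "e > 0" "e' > 0" unfolding e_def e'_def using epos by auto
  have ee': "e' \<le> e" unfolding e_def e'_def using decseq_SucD[OF dec] .
  have fh: "\<iota> h x = \<iota> v x - \<iota> w x" for x
    using lin[of 1 v "-1" w x] by (simp add: h_def)
  have fwt: "\<iota> (w + t *\<^sub>R h) x = \<iota> w x + t * \<iota> h x" for t x
    using lin[of 1 w t h x] by simp
  define a where "a x = psi' p e ((\<iota> v x)\<^sup>2)" for x
  define b where "b x = psi p e ((\<iota> v x)\<^sup>2)" for x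
  define K where "K = p/2 * e powr (p - 2)"
  have a_meas: "a \<in> borel_measurable N"
    unfolding a_def using measurable_compose[OF _ psi'_meas] meas[of v] by measurable
  have a_bnd: "\<bar>a x\<bar> \<le> K" for x
    using psi'_bounds[of p e "(\<iota> v x)\<^sup>2"] assms(6,7) e0 unfolding a_def K_def by simp
  have ib: "integrable N b" unfolding b_def
    by (rule integrable_psi[OF finN meas sq assms(6,7) e0(1)])
  have ip: "integrable N (\<lambda>x. a x * \<iota> z x * \<iota> y x)" for z y
    by (rule integrable_prod3[OF a_meas meas meas sq sq a_bnd])
  have iJ: "integrable N (\<lambda>x. b x + a x * ((\<iota> z x)\<^sup>2 - (\<iota> v x)\<^sup>2))" for z
  proof -
    have "integrable N (\<lambda>x. b x + (a x * \<iota> z x * \<iota> z x - a x * \<iota> v x * \<iota> v x))"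
      using ib ip by auto
    moreover have "(\<lambda>x. b x + (a x * \<iota> z x * \<iota> z x - a x * \<iota> v x * \<iota> v x))
       = (\<lambda>x. b x + a x * ((\<iota> z x)\<^sup>2 - (\<iota> v x)\<^sup>2))"
      by (rule ext) (simp add: power2_eq_square algebra_simps)
    ultimately show ?thesis by simp
  qed
  define J where "J z = integral\<^sup>L N (\<lambda>x. b x + a x * ((\<iota> z x)\<^sup>2 - (\<iota> v x)\<^sup>2))" for z
  define P2 where "P2 = integral\<^sup>L N (\<lambda>x. a x * \<iota> w x * \<iota> h x)"
  define P3 where "P3 = integral\<^sup>L N (\<lambda>x. a x * \<iota> h x * \<iota> h x)"
  have Jexp: "J (w + t *\<^sub>R h) = J w + t * (2 * P2) + t\<^sup>2 * P3" for t
  proof -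
    have "(\<lambda>x. b x + a x * ((\<iota> (w + t *\<^sub>R h) x)\<^sup>2 - (\<iota> v x)\<^sup>2))
        = (\<lambda>x. (b x + a x * ((\<iota> w x)\<^sup>2 - (\<iota> v x)\<^sup>2)) + (t * 2) * (a x * \<iota> w x * \<iota> h x)
                 + t\<^sup>2 * (a x * \<iota> h x * \<iota> h x))"
      by (rule ext) (simp add: fwt power2_eq_square algebra_simps)
    hence "J (w + t *\<^sub>R h) = integral\<^sup>L N (\<lambda>x. (b x + a x * ((\<iota> w x)\<^sup>2 - (\<iota> v x)\<^sup>2)) + (t * 2) * (a x * \<iota> w x * \<iota> h x)
                 + t\<^sup>2 * (a x * \<iota> h x * \<iota> h x))" unfolding J_def by simp
    also have "\<dots> = J w + (t * 2) * P2 + t\<^sup>2 * P3"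
      unfolding J_def P2_def P3_def using iJ ip
      by (simp add: Bochner_Integration.integral_add)
    finally show ?thesis by simp
  qed
  define Q where "Q z = Q_obj \<Omega> \<iota> F F' \<alpha> \<beta> p e v Lk z" for z
  have Qeq: "Q z = F v + F' v (z - v) + Lk/2 * (norm (z - v))\<^sup>2 + \<alpha>/2 * (norm z)\<^sup>2 + \<beta> * J z" for z
    unfolding Q_def Q_obj_def J_def conv by (simp add: a_def b_def)
  define Dt where "Dt = F' v h - Lk * (norm h)\<^sup>2 + \<alpha> * inner w h + \<beta> * (2 * P2)"
  define At where "At = Lk/2 * (norm h)\<^sup>2 + \<alpha>/2 * (norm h)\<^sup>2 + \<beta> * P3"
  have Qexp: "Q (w + t *\<^sub>R h) = Q w + t * Dt + t\<^sup>2 * At" for t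
  proof -
    have e1: "w + t *\<^sub>R h - v = (w - v) + t *\<^sub>R h" by simp
    have e2: "F' v (w + t *\<^sub>R h - v) = F' v (w - v) + t * F' v h"
      unfolding e1 by (simp add: blinfun.add_right blinfun.scaleR_right)
    have "w + t *\<^sub>R h - v = (t - 1) *\<^sub>R h" unfolding h_def by (simp add: algebra_simps)
    hence e3: "(norm (w + t *\<^sub>R h - v))\<^sup>2 = (t - 1)\<^sup>2 * (norm h)\<^sup>2"
      by (simp add: power_mult_distrib)
    have e4: "(norm (w + t *\<^sub>R h))\<^sup>2 = (norm w)\<^sup>2 + 2 * t * inner w h + t\<^sup>2 * (norm h)\<^sup>2"
      unfolding power2_norm_eq_inner by (simp add: inner_add_left inner_add_right inner_commute[of h w] power2_eq_square algebra_simps)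
    have e5: "(norm (w - v))\<^sup>2 = (norm h)\<^sup>2" unfolding h_def by (simp add: norm_minus_commute)
    show ?thesis unfolding Qeq e2 e3 e4 Jexp e5 Dt_def At_def
      by (simp add: power2_eq_square algebra_simps)
  qed
  have "\<forall>t. 0 \<le> t * Dt + t\<^sup>2 * At"
  proof
    fix t
    have "Q w \<le> Q (w + t *\<^sub>R h)" using qmin unfolding is_Q_min_def Q_def e_def v_def w_def Lk_def by blast
    thus "0 \<le> t * Dt + t\<^sup>2 * At" unfolding Qexp by simp
  qed
  hence D0: "Dt = 0" by (rule lin_quad_zero)
  have "Q v = Q (w + 1 *\<^sub>R h)" unfolding h_def by simp
  hence Qv: "Q v = Q w + At" unfolding Qexp D0 by simp
  have Jv: "J v = integral\<^sup>L N (\<lambda>x. psi p e ((\<iota> v x)\<^sup>2))" unfolding J_def b_def by simp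
  have Phiv: "Phi_eps \<Omega> \<iota> F \<alpha> \<beta> p e v = Q v"
    unfolding Phi_eps_def G_eps_def Qeq Jv conv by simp
  have Gw: "integral\<^sup>L N (\<lambda>x. psi p e' ((\<iota> w x)\<^sup>2)) \<le> J w"
    unfolding J_def
  proof (rule integral_mono)
    show "integrable N (\<lambda>x. psi p e' ((\<iota> w x)\<^sup>2))"
      by (rule integrable_psi[OF finN meas sq assms(6,7) e0(2)])
    show "integrable N (\<lambda>x. b x + a x * ((\<iota> w x)\<^sup>2 - (\<iota> v x)\<^sup>2))" by (rule iJ)
    fix x
    have "psi p e' ((\<iota> w x)\<^sup>2) \<le> psi p e ((\<iota> w x)\<^sup>2)"
      using psi_mono[OF assms(6,7) e0(2) ee'] by simp
    also have "\<dots> \<le> b x + a x * ((\<iota> w x)\<^sup>2 - (\<iota> v x)\<^sup>2)"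
      unfolding a_def b_def using psi_tangent[OF assms(6,7) e0(1)] by simp
    finally show "psi p e' ((\<iota> w x)\<^sup>2) \<le> b x + a x * ((\<iota> w x)\<^sup>2 - (\<iota> v x)\<^sup>2)" .
  qed
  have Phiw: "Phi_eps \<Omega> \<iota> F \<alpha> \<beta> p e' w = F w + \<alpha>/2 * (norm w)\<^sup>2 + \<beta> * integral\<^sup>L N (\<lambda>x. psi p e' ((\<iota> w x)\<^sup>2))"
    unfolding Phi_eps_def G_eps_def conv by simp
  have dsc: "F w \<le> F v + F' v (w - v) + Lk * (norm (w - v))\<^sup>2"
    using desc unfolding descent_cond_def v_def w_def Lk_def .
  have e5: "(norm (w - v))\<^sup>2 = (norm h)\<^sup>2" unfolding h_def by (simp add: norm_minus_commute)
  have I3: "(LINT x:\<Omega>|lebesgue. psi' p e ((\<iota> v x)\<^sup>2) * (\<iota> w x - \<iota> v x)\<^sup>2) = P3"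
    unfolding conv P3_def a_def by (rule arg_cong[where f="integral\<^sup>L N"]) (simp add: fh power2_eq_square algebra_simps)
  have bGw: "\<beta> * integral\<^sup>L N (\<lambda>x. psi p e' ((\<iota> w x)\<^sup>2)) \<le> \<beta> * J w"
    using Gw assms(5) by simp
  have "Phi_eps \<Omega> \<iota> F \<alpha> \<beta> p e' w + \<alpha>/2 * (norm (w - v))\<^sup>2 + \<beta> * P3 \<le> Phi_eps \<Omega> \<iota> F \<alpha> \<beta> p e v"
    unfolding Phiv Qv Phiw At_def using Qeq[of w] dsc e5 bGw by simp
  thus "Phi_eps \<Omega> \<iota> F \<alpha> \<beta> p (\<epsilon> (Suc k)) (u (Suc k))
             + \<alpha>/2 * (norm (u (Suc k) - u k))\<^sup>2
             + \<beta> * (LINT x:\<Omega>|lebesgue. psi' p (\<epsilon> k) ((\<iota> (u k) x)\<^sup>2) * (\<iota> (u (Suc k)) x - \<iota> (u k) x)\<^sup>2)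
           \<le> Phi_eps \<Omega> \<iota> F \<alpha> \<beta> p (\<epsilon> k) (u k)"
    using I3 unfolding e_def e'_def v_def w_def by simp
qed

end
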